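(* Let $y_1, \ldots, y_n \in \mathfrak m$ be a minimal system of generators of $\mathfrak m$, so $R = k[[y_1, \ldots, y_n]]$. Let $d = \max\{a_n + 1, c_R\}$ and let $\widetilde y_i$ be the truncation of $y_i$ at $t^d$, i.e. if $y_i = \sum_{j \ge 0} c_{i,j} t^j$ then $\widetilde y_i = \sum_{j < d} c_{i,j} t^j$. Then $R = k[[\widetilde y_1, \ldots, \widetilde y_n]]$. In particular, $R$ can always be generated (as $k[[\cdot]]$) by finitely many polynomials in $t$.
   Context: Let $k$ be a field and let $(R,\mathfrak m)$ be a complete local noetherian domain of dimension $1$ containing $k$ with $R/\mathfrak m = k$, with normalization $\overline R$ having residue field $k$, so $\overline R = k[[t]]$ and $R \subseteq k[[t]]$ is finite birational. Let $v$ be the $t$-adic valuation. For $A \subseteq k((t))$ let $v(A) = \{v(f): f\in A\setminus\{0\}\}$. The conductor is $\mathfrak C_R = \{x\in\overline R: x\overline R\subseteq R\} = t^{c_R}\overline R$, $c_R$ the conductor degree. The Herzog–Kunz sequence of $R$ is $v(\mathfrak m)\setminus v(\mathfrak m^2)$ listed increasingly as $a_1 < \cdots < a_n$ (with $n = \mathrm{edim}(R)$). For $y_i\in\mathfrak m$, $k[[y_1,\ldots,y_n]]$ is the image of $k[[Y_1,\ldots,Y_n]]\to k[[t]]$, $Y_i\mapsto y_i$. *)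

theory Defs
  imports "HOL-Computational_Algebra.Formal_Power_Series"
begin

text \<open>Formal power series over a field k play the role of k[[t]]; fps_X is t,
  and the t-adic valuation v is subdegree.\<close>

definition k_subalgebra :: "'a::field fps set \<Rightarrow> bool" where
  "k_subalgebra R \<longleftrightarrow> (\<forall>c. fps_const c \<in> R) \<and>
     (\<forall>x\<in>R. \<forall>y\<in>R. x + y \<in> R \<and> x * y \<in> R \<and> - x \<in> R)"

definition fps_finite_over :: "'a::field fps set \<Rightarrow> bool" where
  "fps_finite_over R \<longleftrightarrow> (\<exists>G. finite G \<and>
     (\<forall>f. \<exists>r. (\<forall>g\<in>G. r g \<in> R) \<and> f = (\<Sum>g\<in>G. r g * g)))"

definition fps_birational :: "'a::field fps set \<Rightarrow> bool" where
  "fps_birational R \<longleftrightarrow> (\<forall>f. \<exists>a\<in>R. \<exists>b\<in>R. b \<noteq> 0 \<and> f * b = a)"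

text \<open>Local with maximal ideal R \<inter> t k[[t]] (residue field k).\<close>
definition fps_local :: "'a::field fps set \<Rightarrow> bool" where
  "fps_local R \<longleftrightarrow> (\<forall>x\<in>R. fps_nth x 0 \<noteq> 0 \<longrightarrow> inverse x \<in> R)"

definition max_ideal :: "'a::field fps set \<Rightarrow> 'a fps set" where
  "max_ideal R = {x \<in> R. fps_nth x 0 = 0}"

definition fps_ideal_prod :: "'a::field fps set \<Rightarrow> 'a fps set \<Rightarrow> 'a fps set" where
  "fps_ideal_prod I J = {x. \<exists>(N::nat) a b. (\<forall>i<N. a i \<in> I \<and> b i \<in> J) \<and> x = (\<Sum>i<N. a i * b i)}"

definition val_set :: "'a::field fps set \<Rightarrow> nat set" where
  "val_set A = subdegree ` (A - {0})"

definition HK_max :: "'a::field fps set \<Rightarrow> nat" where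
  "HK_max R = Max (val_set (max_ideal R) - val_set (fps_ideal_prod (max_ideal R) (max_ideal R)))"

definition conductor_degree :: "'a::field fps set \<Rightarrow> nat" where
  "conductor_degree R = (LEAST c. \<forall>z. fps_X ^ c * z \<in> R)"

definition fps_gen_ideal :: "'a::field fps set \<Rightarrow> nat set \<Rightarrow> (nat \<Rightarrow> 'a fps) \<Rightarrow> 'a fps set" where
  "fps_gen_ideal R S y = {x. \<exists>r. (\<forall>i\<in>S. r i \<in> R) \<and> x = (\<Sum>i\<in>S. r i * y i)}"

definition min_generators :: "'a::field fps set \<Rightarrow> nat \<Rightarrow> (nat \<Rightarrow> 'a fps) \<Rightarrow> bool" where
  "min_generators R n y \<longleftrightarrow> (\<forall>i<n. y i \<in> max_ideal R) \<and>
     fps_gen_ideal R {..<n} y = max_ideal R \<and>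
     (\<forall>j<n. fps_gen_ideal R ({..<n} - {j}) y \<noteq> max_ideal R)"

text \<open>Image of the substitution homomorphism k[[Y_0..Y_{n-1}]] \<rightarrow> k[[t]], Y_i \<mapsto> y_i,
  applied to the power series with coefficient function c on multi-indices \<alpha>
  (supported in {..<n}). Assuming all y_i have zero constant term, the monomial
  y^\<alpha> has order \<ge> |\<alpha>|, so the j-th coefficient is the given finite sum.\<close>
definition pseries_eval :: "nat \<Rightarrow> (nat \<Rightarrow> 'a::field fps) \<Rightarrow> ((nat \<Rightarrow> nat) \<Rightarrow> 'a) \<Rightarrow> 'a fps" where
  "pseries_eval n y c = Abs_fps (\<lambda>j. \<Sum>\<alpha>\<in>{\<alpha>. (\<forall>i. n \<le> i \<longrightarrow> \<alpha> i = 0) \<and> (\<Sum>i<n. \<alpha> i) \<le> j}.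
       c \<alpha> * fps_nth (\<Prod>i<n. y i ^ \<alpha> i) j)"

definition pseries_subalg :: "nat \<Rightarrow> (nat \<Rightarrow> 'a::field fps) \<Rightarrow> 'a fps set" where
  "pseries_subalg n y = range (pseries_eval n y)"

definition fps_truncate :: "nat \<Rightarrow> 'a::field fps \<Rightarrow> 'a fps" where
  "fps_truncate d f = Abs_fps (\<lambda>j. if j < d then fps_nth f j else 0)"

definition fps_is_poly :: "'a::field fps \<Rightarrow> bool" where
  "fps_is_poly f \<longleftrightarrow> (\<exists>N. \<forall>j\<ge>N. fps_nth f j = 0)"

end

theory Submission
  imports Defs
begin
unbundle fps_syntax

lemma Xdvd_nth: "fps_X^k dvd (f::'a::field fps) \<Longrightarrow> j < k \<Longrightarrow> f $ j = 0"
  by (auto simp: dvd_def fps_X_power_mult_nth)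

lemma Xdvd_intro: "(\<And>j. j < k \<Longrightarrow> (f::'a::field fps) $ j = 0) \<Longrightarrow> fps_X^k dvd f"
proof (cases "f = 0")
  case False
  assume h: "\<And>j. j < k \<Longrightarrow> f $ j = 0"
  have "k \<le> subdegree f" using False h by (intro subdegree_geI) auto
  then have "f = fps_shift k f * fps_X^k" by (rule subdegree_decompose')
  then show ?thesis by (metis dvd_triv_right)
qed simp

lemma Xdvd_mono: "fps_X^k dvd (f::'a::field fps) \<Longrightarrow> l \<le> k \<Longrightarrow> fps_X^l dvd f"
  by (meson Xdvd_intro Xdvd_nth less_le_trans)

lemma sum_lessThan_add: "(\<Sum>i<N+(K::nat). F i) = (\<Sum>i<N. F i) + (\<Sum>i<K. F (N+i))"
  by (induction K) (simp_all add: algebra_simps)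

lemma Xpow_val: "fps_X^g \<in> A \<Longrightarrow> g \<in> val_set A"
  unfolding val_set_def by (rule rev_image_eqI[of "fps_X^g"]) (auto simp: fps_X_power_subdegree)

locale subalg =
  fixes R :: "'a::field fps set"
  assumes sub: "k_subalgebra R"
begin

lemma const_in[simp]: "fps_const a \<in> R" using sub by (simp add: k_subalgebra_def)
lemma zero_in[simp]: "0 \<in> R" using const_in[of 0] by simp
lemma one_in[simp]: "1 \<in> R" using const_in[of 1] by simp
lemma add_in[simp]: "x \<in> R \<Longrightarrow> y \<in> R \<Longrightarrow> x + y \<in> R" using sub by (simp add: k_subalgebra_def)
lemma mult_in[simp]: "x \<in> R \<Longrightarrow> y \<in> R \<Longrightarrow> x * y \<in> R" using sub by (simp add: k_subalgebra_def)
lemma neg_in[simp]: "x \<in> R \<Longrightarrow> - x \<in> R" using sub unfolding k_subalgebra_def by blast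
lemma diff_in[simp]: "x \<in> R \<Longrightarrow> y \<in> R \<Longrightarrow> x - y \<in> R"
  using add_in[of x "-y"] by simp
lemma sum_in: "(\<And>i. i \<in> A \<Longrightarrow> f i \<in> R) \<Longrightarrow> sum f A \<in> R"
  by (induction A rule: infinite_finite_induct) auto
lemma prod_in: "(\<And>i. i \<in> A \<Longrightarrow> f i \<in> R) \<Longrightarrow> prod f A \<in> R"
  by (induction A rule: infinite_finite_induct) auto
lemma pow_in: "x \<in> R \<Longrightarrow> x ^ k \<in> R"
  by (induction k) auto
end

lemma conductor_exists:
  assumes sub: "k_subalgebra R" and fin: "fps_finite_over R" and bir: "fps_birational R"
  shows "\<exists>c. \<forall>z. fps_X^c * z \<in> R"
proof -
  interpret subalg R by unfold_locales (rule sub)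
  obtain G where G: "finite G" "\<And>f. \<exists>r. (\<forall>g\<in>G. r g \<in> R) \<and> f = (\<Sum>g\<in>G. r g * g)"
    using fin unfolding fps_finite_over_def by blast
  obtain A B where AB: "\<And>g. A g \<in> R \<and> B g \<in> R \<and> B g \<noteq> 0 \<and> g * B g = A g"
    using bir unfolding fps_birational_def by metis
  define b where "b = (\<Prod>g\<in>G. B g)"
  have b0: "b \<noteq> 0" unfolding b_def using G(1) AB by simp
  have bg: "b * g \<in> R" if "g \<in> G" for g
  proof -
    have "b = B g * (\<Prod>h\<in>G-{g}. B h)" unfolding b_def using G(1) that by (simp add: prod.remove)
    then have "b * g = A g * (\<Prod>h\<in>G-{g}. B h)" using AB[of g] by (simp add: algebra_simps)
    moreover have "(\<Prod>h\<in>G-{g}. B h) \<in> R" using AB by (intro prod_in) auto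
    ultimately show ?thesis using AB mult_in by metis
  qed
  have bf: "b * f \<in> R" for f
  proof -
    obtain r where r: "\<forall>g\<in>G. r g \<in> R" "f = (\<Sum>g\<in>G. r g * g)" using G(2) by blast
    have "b * f = (\<Sum>g\<in>G. r g * (b * g))" unfolding r(2) by (simp add: sum_distrib_left algebra_simps)
    then show ?thesis using r(1) bg by (auto intro!: sum_in)
  qed
  define v where "v = subdegree b"
  define u where "u = fps_shift v b"
  have bu: "b = u * fps_X^v" unfolding u_def v_def by (rule subdegree_decompose)
  have u0: "u $ 0 \<noteq> 0" unfolding u_def v_def using b0 by simp
  have "fps_X^v * z = b * (z * inverse u)" for z
  proof -
    have "b * (z * inverse u) = fps_X^v * z * (u * inverse u)" unfolding bu by (simp add: algebra_simps)
    also have "\<dots> = fps_X^v * z" using inverse_mult_eq_1'[OF u0] by simp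
    finally show ?thesis by (rule sym)
  qed
  then show ?thesis using bf by metis
qed

locale setting = subalg R for R :: "'a::field fps set" +
  fixes c :: nat
  assumes cond: "\<And>z. fps_X^c * z \<in> R"
begin

lemma dvd_in: "fps_X^k dvd f \<Longrightarrow> c \<le> k \<Longrightarrow> f \<in> R"
  using Xdvd_mono[of k f c] cond by (auto simp: dvd_def)


abbreviation "m \<equiv> max_ideal R"
abbreviation "M2 \<equiv> fps_ideal_prod (max_ideal R) (max_ideal R)"

lemma m_iff: "x \<in> m \<longleftrightarrow> x \<in> R \<and> x $ 0 = 0" by (simp add: max_ideal_def)

lemma m_mult: "r \<in> R \<Longrightarrow> x \<in> m \<Longrightarrow> r * x \<in> m" by (simp add: m_iff)

lemma M2_zero: "0 \<in> M2" unfolding fps_ideal_prod_def by (rule CollectI, rule exI[of _ 0]) simp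


lemma M2_add: assumes "x \<in> M2" "y \<in> M2" shows "x + y \<in> M2"
proof -
  obtain N :: nat and a b where x: "\<forall>i<N. a i \<in> m \<and> b i \<in> m" "x = (\<Sum>i<N. a i * b i)"
    using assms(1) by (auto simp: fps_ideal_prod_def)
  obtain M :: nat and a' b' where y: "\<forall>i<M. a' i \<in> m \<and> b' i \<in> m" "y = (\<Sum>i<M. a' i * b' i)"
    using assms(2) by (auto simp: fps_ideal_prod_def)
  define A where "A i = (if i < N then a i else a' (i - N))" for i
  define B where "B i = (if i < N then b i else b' (i - N))" for i
  have "(\<Sum>i<N. A i * B i) = (\<Sum>i<N. a i * b i)"
    by (rule sum.cong) (auto simp: A_def B_def)
  moreover have "(\<Sum>i<M. A (N+i) * B (N+i)) = (\<Sum>i<M. a' i * b' i)"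
    by (rule sum.cong) (auto simp: A_def B_def)
  ultimately have "x + y = (\<Sum>i<N+M. A i * B i)"
    unfolding sum_lessThan_add x(2) y(2) by simp
  moreover have "\<forall>i<N+M. A i \<in> m \<and> B i \<in> m"
  proof (intro allI impI)
    fix i assume "i < N + M"
    then show "A i \<in> m \<and> B i \<in> m" using x(1) y(1)[rule_format, of "i - N"] unfolding A_def B_def by auto
  qed
  ultimately show ?thesis unfolding fps_ideal_prod_def by blast
qed

lemma M2_mult: assumes "r \<in> R" "x \<in> M2" shows "r * x \<in> M2"
proof -
  obtain N :: nat and a b where x: "\<forall>i<N. a i \<in> m \<and> b i \<in> m" "x = (\<Sum>i<N. a i * b i)"
    using assms(2) by (auto simp: fps_ideal_prod_def)
  have "r * x = (\<Sum>i<N. (r * a i) * b i)" unfolding x(2) sum_distrib_left by (simp only: mult.assoc)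
  moreover have "\<forall>i<N. r * a i \<in> m \<and> b i \<in> m" using x(1) m_mult[OF assms(1)] by blast
  ultimately show ?thesis unfolding fps_ideal_prod_def
    by (intro CollectI exI[of _ N] exI[of _ "\<lambda>i. r * a i"] exI[of _ b]) simp
qed

lemma M2_sum: "(\<And>i. i \<in> A \<Longrightarrow> f i \<in> M2) \<Longrightarrow> sum f A \<in> M2"
  by (induction A rule: infinite_finite_induct) (auto intro: M2_zero M2_add)

lemma M2_in_m: assumes "x \<in> M2" shows "x \<in> m"
proof -
  obtain N :: nat and a b where x: "\<forall>i<N. a i \<in> m \<and> b i \<in> m" "x = (\<Sum>i<N. a i * b i)"
    using assms by (auto simp: fps_ideal_prod_def)
  have "x \<in> R" unfolding x(2) using x(1) by (intro sum_in) (auto simp: m_iff)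
  moreover have "x $ 0 = 0" unfolding x(2) fps_sum_nth using x(1) by (simp add: m_iff)
  ultimately show ?thesis by (simp add: m_iff)
qed

lemma Xpow_m: "c \<le> k \<Longrightarrow> 0 < k \<Longrightarrow> fps_X^k \<in> m"
  using dvd_in[of k "fps_X^k"] by (simp add: m_iff)

lemma big_M2: assumes "fps_X^(2*c+2) dvd f" shows "f \<in> M2"
proof -
  obtain g where g: "f = fps_X^(2*c+2) * g" using assms by (auto simp: dvd_def)
  define p where "p = (fps_X::'a fps)^(c+1)"
  have e: "2*c+2 = (c+1)+(c+1)" by simp
  have f: "f = p * (p * g)" unfolding g p_def e power_add by (simp only: mult.assoc)
  have p: "p \<in> m" unfolding p_def by (rule Xpow_m) auto
  have pg: "p * g \<in> m" unfolding p_def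
    using dvd_in[of "c+1" "fps_X^(c+1) * g"] by (simp add: m_iff)
  show ?thesis unfolding fps_ideal_prod_def
    by (intro CollectI exI[of _ "1::nat"] exI[of _ "\<lambda>_. p"] exI[of _ "\<lambda>_. p * g"]) (use f p pg in simp)
qed

lemma HK_finite: "finite (val_set m - val_set M2)"
proof (rule finite_subset)
  show "val_set m - val_set M2 \<subseteq> {..<2*c+2}"
  proof
    fix g assume g: "g \<in> val_set m - val_set M2"
    show "g \<in> {..<2*c+2}"
    proof (rule ccontr)
      assume "g \<notin> {..<2*c+2}"
      then have "fps_X^g \<in> M2" by (intro big_M2 le_imp_power_dvd) auto
      then have "g \<in> val_set M2"
        by (rule Xpow_val)
      then show False using g by blast
    qed
  qed
qed simp

lemma dvd_M2: assumes "HK_max R < d'" "c \<le> d'" "fps_X^d' dvd f" shows "f \<in> M2"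
proof -
  define P where "P k = (\<forall>f. fps_X^k dvd f \<longrightarrow> f \<in> M2)" for k
  have "P d'"
  proof (rule inc_induct[of d' "max d' (2*c+2)"])
    show "P (max d' (2*c+2))" unfolding P_def
    proof (intro allI impI)
      fix f :: "'a fps" assume "fps_X^(max d' (2*c+2)) dvd f"
      then show "f \<in> M2" by (intro big_M2, rule Xdvd_mono) auto
    qed
  next
    fix n assume n: "d' \<le> n" "n < max d' (2*c+2)" and IH: "P (Suc n)"
    show "P n" unfolding P_def
    proof (intro allI impI)
      fix f :: "'a fps" assume f: "fps_X^n dvd f"
      show "f \<in> M2"
      proof (cases "f $ n = 0")
        case True
        have "fps_X^(Suc n) dvd f"
          by (rule Xdvd_intro) (use Xdvd_nth[OF f] True in \<open>auto simp: less_Suc_eq\<close>)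
        then show ?thesis using IH unfolding P_def by blast
      next
        case False
        have "fps_X^n \<in> m" using n assms by (intro Xpow_m) auto
        then have nm: "n \<in> val_set m"
          by (rule Xpow_val)
        have "n \<in> val_set M2"
        proof (rule ccontr)
          assume "n \<notin> val_set M2"
          then have "n \<le> HK_max R" unfolding HK_max_def using nm HK_finite by (intro Max_ge) auto
          then show False using n assms by simp
        qed
        then obtain w where w: "w \<in> M2" "w \<noteq> 0" "subdegree w = n" unfolding val_set_def by auto
        have wn: "w $ n \<noteq> 0" using w by auto
        define g where "g = f - fps_const (f $ n / w $ n) * w"
        have "fps_X^(Suc n) dvd g"
        proof (rule Xdvd_intro)
          fix j assume "j < Suc n"
          then consider "j < n" | "j = n" by linarith
          then show "g $ j = 0"
          proof cases
            case 1 then show ?thesis using Xdvd_nth[OF f 1] w(3) by (auto simp: g_def)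
          next
            case 2 then show ?thesis using wn by (simp add: g_def)
          qed
        qed
        then have "g \<in> M2" using IH unfolding P_def by blast
        moreover have "fps_const (f $ n / w $ n) * w \<in> M2" using w(1) by (intro M2_mult) auto
        ultimately have "g + fps_const (f $ n / w $ n) * w \<in> M2" by (rule M2_add)
        then show ?thesis by (simp add: g_def)
      qed
    qed
  qed simp
  then show ?thesis using assms(3) unfolding P_def by blast
qed

end

locale gens = setting R c for R :: "'a::field fps set" and c +
  fixes n :: nat and y z :: "nat \<Rightarrow> 'a fps" and d :: nat
  assumes ym: "\<And>i. i < n \<Longrightarrow> y i \<in> max_ideal R"
    and gen: "fps_gen_ideal R {..<n} y = max_ideal R"
    and zdiff: "\<And>i. i < n \<Longrightarrow> fps_X^d dvd (y i - z i)"
    and dHK: "HK_max R < d" and dc: "c \<le> d"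
begin

definition J where "J = fps_gen_ideal R {..<n} z"

lemma J_iff: "x \<in> J \<longleftrightarrow> (\<exists>r. (\<forall>i<n. r i \<in> R) \<and> x = (\<Sum>i<n. r i * z i))"
  unfolding J_def fps_gen_ideal_def mem_Collect_eq Ball_def lessThan_iff by (rule refl)

lemma z_m: assumes "i < n" shows "z i \<in> m"
proof -
  have 1: "y i - z i \<in> R" using zdiff[OF assms] dc by (rule dvd_in)
  have 2: "(y i - z i) $ 0 = 0" using Xdvd_nth[OF zdiff[OF assms], of 0] dHK by simp
  have 3: "y i \<in> R" "y i $ 0 = 0" using ym[OF assms] by (auto simp: m_iff)
  have "z i \<in> R" using diff_in[OF 3(1) 1] by simp
  moreover have "z i $ 0 = 0" using 2 3(2) by simp
  ultimately show ?thesis by (simp add: m_iff)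
qed

lemma J_zero: "0 \<in> J" unfolding J_iff by (intro exI[of _ "\<lambda>_. 0"]) simp

lemma J_add: assumes "x \<in> J" "x' \<in> J" shows "x + x' \<in> J"
proof -
  obtain r where "\<forall>i<n. r i \<in> R" "x = (\<Sum>i<n. r i * z i)"
    using assms(1) unfolding J_iff by blast
  moreover obtain r' where "\<forall>i<n. r' i \<in> R" "x' = (\<Sum>i<n. r' i * z i)"
    using assms(2) unfolding J_iff by blast
  ultimately show ?thesis unfolding J_iff
    by (intro exI[of _ "\<lambda>i. r i + r' i"]) (simp add: sum.distrib distrib_right)
qed

lemma J_mult: assumes "a \<in> R" "x \<in> J" shows "a * x \<in> J"
proof -
  obtain r where "\<forall>i<n. r i \<in> R" "x = (\<Sum>i<n. r i * z i)"
    using assms unfolding J_iff by blast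
  then show ?thesis unfolding J_iff using assms(1)
    by (intro exI[of _ "\<lambda>i. a * r i"]) (simp add: sum_distrib_left mult.assoc)
qed

lemma J_sum: "(\<And>i. i \<in> A \<Longrightarrow> f i \<in> J) \<Longrightarrow> sum f A \<in> J"
  by (induction A rule: infinite_finite_induct) (auto intro: J_zero J_add)

lemma J_R: assumes "x \<in> J" shows "x \<in> R"
proof -
  obtain r where "\<forall>i<n. r i \<in> R" "x = (\<Sum>i<n. r i * z i)"
    using assms unfolding J_iff by blast
  then show ?thesis using z_m by (auto intro!: sum_in simp: m_iff)
qed

lemma base: assumes "x \<in> m" shows "\<exists>j\<in>J. x - j \<in> M2"
proof -
  obtain s where s: "\<forall>i<n. s i \<in> R" "x = (\<Sum>i<n. s i * y i)"
    using assms gen[symmetric] unfolding fps_gen_ideal_def by auto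
  have "(\<Sum>i<n. s i * z i) \<in> J" unfolding J_iff using s(1) by blast
  moreover have "x - (\<Sum>i<n. s i * z i) = (\<Sum>i<n. s i * (y i - z i))"
    unfolding s(2) by (simp add: sum_subtractf right_diff_distrib)
  moreover have "(\<Sum>i<n. s i * (y i - z i)) \<in> M2"
    using s(1) zdiff dHK dc by (intro M2_sum M2_mult dvd_M2) auto
  ultimately show ?thesis by (intro bexI[of _ "\<Sum>i<n. s i * z i"]) simp_all
qed

lemma ord_ind: "\<forall>x\<in>m. \<exists>j\<in>J. x - j \<in> R \<and> fps_X^k dvd (x - j)"
proof (induction k)
  case 0
  show ?case
  proof
    fix x assume "x \<in> m"
    then show "\<exists>j\<in>J. x - j \<in> R \<and> fps_X^0 dvd (x - j)" using J_zero by (intro bexI[of _ 0]) (auto simp: m_iff)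
  qed
next
  case (Suc k)
  show ?case
  proof
    fix x assume x: "x \<in> m"
    obtain j0 where j0: "j0 \<in> J" "x - j0 \<in> M2" using base[OF x] by blast
    obtain N :: nat and a b where ab: "\<forall>i<N. a i \<in> m \<and> b i \<in> m" "x - j0 = (\<Sum>i<N. a i * b i)"
      using j0(2) by (auto simp: fps_ideal_prod_def)
    have "\<exists>j'. \<forall>i. i < N \<longrightarrow> j' i \<in> J \<and> a i - j' i \<in> R \<and> fps_X^k dvd (a i - j' i)"
      by (rule choice) (use Suc ab(1) in blast)
    then obtain j' where j': "\<And>i. i < N \<Longrightarrow> j' i \<in> J \<and> a i - j' i \<in> R \<and> fps_X^k dvd (a i - j' i)"
      by blast
    define j where "j = j0 + (\<Sum>i<N. j' i * b i)"
    have "j \<in> J" unfolding j_def using j0(1) j' ab(1)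
      by (intro J_add J_sum) (auto simp: mult.commute[of "j' _"] intro!: J_mult simp: m_iff)
    moreover have xj: "x - j = (\<Sum>i<N. (a i - j' i) * b i)"
    proof -
      have "x - j = (x - j0) - (\<Sum>i<N. j' i * b i)" by (simp add: j_def)
      also have "\<dots> = (\<Sum>i<N. (a i - j' i) * b i)"
        unfolding ab(2) by (simp add: sum_subtractf left_diff_distrib)
      finally show ?thesis .
    qed
    moreover have "x - j \<in> R" unfolding xj using j' ab(1) by (intro sum_in mult_in) (auto simp: m_iff)
    moreover have "fps_X^(Suc k) dvd (x - j)" unfolding xj
    proof (intro dvd_sum)
      fix i assume i: "i \<in> {..<N}"
      have "fps_X dvd b i" using Xdvd_intro[of 1 "b i"] ab(1) i by (auto simp: m_iff)
      then have "fps_X^k * fps_X dvd (a i - j' i) * b i" using j' i by (intro mult_dvd_mono) auto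
      then show "fps_X^(Suc k) dvd (a i - j' i) * b i" by (simp add: mult.commute)
    qed
    ultimately show "\<exists>j\<in>J. x - j \<in> R \<and> fps_X^(Suc k) dvd (x - j)" by blast
  qed
qed

lemma J_nonzero: "\<exists>u\<in>J. u \<noteq> 0"
proof -
  have "fps_X^(c+1) \<in> m" by (rule Xpow_m) auto
  then obtain j where j: "j \<in> J" "fps_X^(c+2) dvd (fps_X^(c+1) - j)" using ord_ind by blast
  have "j \<noteq> 0"
  proof
    assume "j = 0"
    then have "(fps_X^(c+1) :: 'a fps) $ (c+1) = 0" using Xdvd_nth[OF j(2), of "c+1"] by simp
    then show False by (simp add: fps_X_power_iff)
  qed
  then show ?thesis using j(1) by blast
qed

lemma m_sub_J: assumes "x \<in> m" shows "x \<in> J"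
proof -
  obtain u where u: "u \<in> J" "u \<noteq> 0" using J_nonzero by blast
  define v where "v = subdegree u"
  define u' where "u' = fps_shift v u"
  have uu: "u = u' * fps_X^v" unfolding u'_def v_def by (rule subdegree_decompose)
  have u0: "u' $ 0 \<noteq> 0" unfolding u'_def v_def using u(2) by simp
  obtain j where j: "j \<in> J" "fps_X^(c+v) dvd (x - j)" using ord_ind assms by blast
  obtain g where g: "x - j = fps_X^(c+v) * g" using j(2) by (auto simp: dvd_def)
  define a where "a = fps_X^c * (g * inverse u')"
  have aR: "a \<in> R" unfolding a_def by (rule cond)
  have "a * u = fps_X^(c+v) * g * (u' * inverse u')" unfolding a_def uu by (simp add: power_add algebra_simps)
  also have "\<dots> = x - j" using inverse_mult_eq_1'[OF u0] g by simp
  finally have "x = j + a * u" by simp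
  then show ?thesis using J_add[OF j(1) J_mult[OF aR u(1)]] by simp
qed

end

definition deg :: "nat \<Rightarrow> (nat \<Rightarrow> nat) \<Rightarrow> nat" where "deg n \<alpha> = (\<Sum>i<n. \<alpha> i)"
definition mon :: "nat \<Rightarrow> (nat \<Rightarrow> 'a::field fps) \<Rightarrow> (nat \<Rightarrow> nat) \<Rightarrow> 'a fps" where
  "mon n z \<alpha> = (\<Prod>i<n. z i ^ \<alpha> i)"
definition Aset :: "nat \<Rightarrow> nat \<Rightarrow> (nat \<Rightarrow> nat) set" where
  "Aset n j = {\<alpha>. (\<forall>i. n \<le> i \<longrightarrow> \<alpha> i = 0) \<and> (\<Sum>i<n. \<alpha> i) \<le> j}"
definition Hset :: "nat \<Rightarrow> nat \<Rightarrow> (nat \<Rightarrow> nat) set" where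
  "Hset n k = {\<alpha>. (\<forall>i. n \<le> i \<longrightarrow> \<alpha> i = 0) \<and> deg n \<alpha> = k}"

lemma Aset_finite: "finite (Aset n j)"
proof (rule finite_subset)
  show "Aset n j \<subseteq> {\<alpha>. \<forall>x. (x \<in> {..<n} \<longrightarrow> \<alpha> x \<in> {..j}) \<and> (x \<notin> {..<n} \<longrightarrow> \<alpha> x = 0)}"
  proof (intro subsetI CollectI allI conjI impI)
    fix \<alpha> x assume a: "\<alpha> \<in> Aset n j" "x \<in> {..<n}"
    have "\<alpha> x \<le> (\<Sum>i<n. \<alpha> i)" using a(2) by (intro member_le_sum) auto
    then show "\<alpha> x \<in> {..j}" using a(1) by (auto simp: Aset_def)
  next
    fix \<alpha> x assume a: "\<alpha> \<in> Aset n j" "x \<notin> {..<n}"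
    then show "\<alpha> x = 0" by (auto simp: Aset_def)
  qed
qed (use finite_set_of_finite_funs[of "{..<n}" "{..j}" 0] in simp)

lemma Hset_sub: "Hset n k \<subseteq> Aset n k" unfolding Hset_def Aset_def deg_def by auto
lemma Hset_finite: "finite (Hset n k)" by (rule finite_subset[OF Hset_sub Aset_finite])

lemma Aset_Union: "Aset n j = (\<Union>k\<in>{..j}. Hset n k)"
proof (intro set_eqI iffI)
  fix \<alpha> assume "\<alpha> \<in> Aset n j"
  then show "\<alpha> \<in> (\<Union>k\<in>{..j}. Hset n k)" unfolding Aset_def Hset_def deg_def
    by (intro UN_I[of "\<Sum>i<n. \<alpha> i"]) auto
next
  fix \<alpha> assume "\<alpha> \<in> (\<Union>k\<in>{..j}. Hset n k)"
  then show "\<alpha> \<in> Aset n j" unfolding Aset_def Hset_def deg_def by auto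
qed

lemma Hset_disj: "k \<noteq> l \<Longrightarrow> Hset n k \<inter> Hset n l = {}"
  unfolding Hset_def by blast

lemma mon_dvd: assumes "\<And>i. i < n \<Longrightarrow> z i $ 0 = 0" shows "fps_X^(deg n \<alpha>) dvd mon n z \<alpha>"
proof -
  have "fps_X^(deg n \<alpha>) = (\<Prod>i<n. (fps_X::'a::field fps) ^ \<alpha> i)" unfolding deg_def by (simp add: power_sum)
  moreover have "(\<Prod>i<n. (fps_X::'a fps) ^ \<alpha> i) dvd mon n z \<alpha>" unfolding mon_def
  proof (rule prod_dvd_prod)
    fix i assume "i \<in> {..<n}"
    then have "fps_X dvd z i" using Xdvd_intro[of 1 "z i"] assms by auto
    then show "fps_X ^ \<alpha> i dvd z i ^ \<alpha> i" by (rule dvd_power_same)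
  qed
  ultimately show ?thesis by simp
qed

lemma mon_nth: assumes "\<And>i. i < n \<Longrightarrow> z i $ 0 = 0" "j < deg n \<alpha>" shows "mon n z \<alpha> $ j = 0"
  using Xdvd_nth[OF mon_dvd[OF assms(1)] assms(2)] .

lemma pseries_eval_nth: "pseries_eval n z cf $ j = (\<Sum>\<alpha>\<in>Aset n j. cf \<alpha> * mon n z \<alpha> $ j)"
  by (simp add: pseries_eval_def Aset_def mon_def)

definition Q :: "nat \<Rightarrow> (nat \<Rightarrow> 'a::field fps) \<Rightarrow> nat \<Rightarrow> ((nat \<Rightarrow> nat) \<Rightarrow> 'a) \<Rightarrow> 'a fps" where
  "Q n z k h = (\<Sum>\<alpha>\<in>Hset n k. fps_const (h \<alpha>) * mon n z \<alpha>)"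

definition Tset :: "'a::field fps set \<Rightarrow> nat \<Rightarrow> (nat \<Rightarrow> 'a fps) \<Rightarrow> nat \<Rightarrow> 'a fps set" where
  "Tset R n z k = {w. \<exists>r. (\<forall>\<alpha>\<in>Hset n k. r \<alpha> \<in> R) \<and> w = (\<Sum>\<alpha>\<in>Hset n k. r \<alpha> * mon n z \<alpha>)}"

fun resid :: "'a::field fps set \<Rightarrow> nat \<Rightarrow> (nat \<Rightarrow> 'a fps) \<Rightarrow> 'a fps \<Rightarrow> nat \<Rightarrow> 'a fps" where
  "resid R n z x 0 = x"
| "resid R n z x (Suc k) = resid R n z x k - Q n z k (SOME h. resid R n z x k - Q n z k h \<in> Tset R n z (Suc k))"

definition hs :: "'a::field fps set \<Rightarrow> nat \<Rightarrow> (nat \<Rightarrow> 'a fps) \<Rightarrow> 'a fps \<Rightarrow> nat \<Rightarrow> (nat \<Rightarrow> nat) \<Rightarrow> 'a" where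
  "hs R n z x k = (SOME h. resid R n z x k - Q n z k h \<in> Tset R n z (Suc k))"

lemma resid_Suc: "resid R n z x (Suc k) = resid R n z x k - Q n z k (hs R n z x k)"
  by (simp add: hs_def)

locale compl = setting R c for R :: "'a::field fps set" and c +
  fixes n :: nat and z :: "nat \<Rightarrow> 'a fps"
  assumes zm: "\<And>i. i < n \<Longrightarrow> z i \<in> max_ideal R"
    and mJ: "\<And>x. x \<in> max_ideal R \<Longrightarrow> \<exists>s. (\<forall>i<n. s i \<in> R) \<and> x = (\<Sum>i<n. s i * z i)"
begin

definition T where "T k = Tset R n z k"

lemma T_iff: "w \<in> T k \<longleftrightarrow> (\<exists>r. (\<forall>\<alpha>\<in>Hset n k. r \<alpha> \<in> R) \<and> w = (\<Sum>\<alpha>\<in>Hset n k. r \<alpha> * mon n z \<alpha>))"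
  unfolding T_def Tset_def mem_Collect_eq by (rule refl)

lemma z0: "i < n \<Longrightarrow> z i $ 0 = 0" using zm by (simp add: m_iff)
lemma zR: "i < n \<Longrightarrow> z i \<in> R" using zm by (simp add: m_iff)

lemma mon_R: "mon n z \<alpha> \<in> R" unfolding mon_def by (intro prod_in pow_in zR) simp

lemma T_zero: "0 \<in> T k" unfolding T_iff by (intro exI[of _ "\<lambda>_. 0"]) simp

lemma T_add: assumes "w \<in> T k" "w' \<in> T k" shows "w + w' \<in> T k"
proof -
  obtain r where r: "\<forall>\<alpha>\<in>Hset n k. r \<alpha> \<in> R" "w = (\<Sum>\<alpha>\<in>Hset n k. r \<alpha> * mon n z \<alpha>)"
    using assms(1) unfolding T_iff by blast
  obtain r' where r': "\<forall>\<alpha>\<in>Hset n k. r' \<alpha> \<in> R" "w' = (\<Sum>\<alpha>\<in>Hset n k. r' \<alpha> * mon n z \<alpha>)"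
    using assms(2) unfolding T_iff by blast
  show ?thesis unfolding T_iff
    by (intro exI[of _ "\<lambda>\<alpha>. r \<alpha> + r' \<alpha>"]) (use r r' in \<open>simp add: sum.distrib distrib_right\<close>)
qed

lemma T_sum: "(\<And>i. i \<in> A \<Longrightarrow> f i \<in> T k) \<Longrightarrow> sum f A \<in> T k"
  by (induction A rule: infinite_finite_induct) (auto intro: T_zero T_add)

lemma T_single: assumes "s \<in> R" "\<beta> \<in> Hset n k" shows "s * mon n z \<beta> \<in> T k"
proof -
  have "(\<Sum>\<alpha>\<in>Hset n k. (if \<alpha> = \<beta> then s else 0) * mon n z \<alpha>) = (\<Sum>\<alpha>\<in>Hset n k. if \<alpha> = \<beta> then s * mon n z \<beta> else 0)"
    by (rule sum.cong) auto
  also have "\<dots> = s * mon n z \<beta>" using assms(2) Hset_finite by simp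
  finally have "(\<Sum>\<alpha>\<in>Hset n k. (if \<alpha> = \<beta> then s else 0) * mon n z \<alpha>) = s * mon n z \<beta>" .
  then show ?thesis unfolding T_iff using assms(1)
    by (intro exI[of _ "\<lambda>\<alpha>. if \<alpha> = \<beta> then s else 0"]) auto
qed

lemma mon_step: assumes "i < n" shows "mon n z (\<alpha>(i := Suc (\<alpha> i))) = z i * mon n z \<alpha>"
proof -
  have f: "finite {..<n}" "i \<in> {..<n}" using assms by auto
  have e3: "mon n z \<alpha> = z i ^ \<alpha> i * (\<Prod>l\<in>{..<n}-{i}. z l ^ \<alpha> l)"
    unfolding mon_def by (rule prod.remove[OF f])
  have e1: "mon n z (\<alpha>(i := Suc (\<alpha> i))) = (\<lambda>l. z l ^ (\<alpha>(i := Suc (\<alpha> i))) l) i * (\<Prod>l\<in>{..<n}-{i}. z l ^ (\<alpha>(i := Suc (\<alpha> i))) l)"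
    unfolding mon_def by (rule prod.remove[OF f])
  have e2: "(\<Prod>l\<in>{..<n}-{i}. z l ^ (\<alpha>(i := Suc (\<alpha> i))) l) = (\<Prod>l\<in>{..<n}-{i}. z l ^ \<alpha> l)"
    by (rule prod.cong) auto
  have e4: "(\<lambda>l. z l ^ (\<alpha>(i := Suc (\<alpha> i))) l) i = z i * z i ^ \<alpha> i" by simp
  show ?thesis unfolding e1 e2 e4 e3 by (simp only: mult.assoc)
qed

lemma H_step: assumes "\<alpha> \<in> Hset n k" "i < n" shows "\<alpha>(i := Suc (\<alpha> i)) \<in> Hset n (Suc k)"
proof -
  have f: "finite {..<n}" "i \<in> {..<n}" using assms by auto
  have e3: "deg n \<alpha> = \<alpha> i + (\<Sum>l\<in>{..<n}-{i}. \<alpha> l)"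
    unfolding deg_def by (rule sum.remove[OF f])
  have e1: "deg n (\<alpha>(i := Suc (\<alpha> i))) = (\<alpha>(i := Suc (\<alpha> i))) i + (\<Sum>l\<in>{..<n}-{i}. (\<alpha>(i := Suc (\<alpha> i))) l)"
    unfolding deg_def by (rule sum.remove[OF f])
  have e2: "(\<Sum>l\<in>{..<n}-{i}. (\<alpha>(i := Suc (\<alpha> i))) l) = (\<Sum>l\<in>{..<n}-{i}. \<alpha> l)"
    by (rule sum.cong) auto
  have e4: "(\<alpha>(i := Suc (\<alpha> i))) i = Suc (\<alpha> i)" by simp
  have "deg n (\<alpha>(i := Suc (\<alpha> i))) = Suc (deg n \<alpha>)" unfolding e1 e2 e4 e3 by simp
  then show ?thesis using assms unfolding Hset_def by auto
qed

lemma T_step: assumes "w \<in> T k" shows "\<exists>h. w - Q n z k h \<in> T (Suc k)"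
proof -
  obtain r where r: "\<forall>\<alpha>\<in>Hset n k. r \<alpha> \<in> R" "w = (\<Sum>\<alpha>\<in>Hset n k. r \<alpha> * mon n z \<alpha>)"
    using assms unfolding T_iff by blast
  define h where "h \<alpha> = r \<alpha> $ 0" for \<alpha>
  have "w - Q n z k h = (\<Sum>\<alpha>\<in>Hset n k. (r \<alpha> - fps_const (h \<alpha>)) * mon n z \<alpha>)"
    unfolding r(2) Q_def by (simp add: sum_subtractf left_diff_distrib)
  also have "\<dots> \<in> T (Suc k)"
  proof (rule T_sum)
    fix \<alpha> assume a: "\<alpha> \<in> Hset n k"
    have "r \<alpha> - fps_const (h \<alpha>) \<in> m" using r(1) a by (simp add: m_iff h_def)
    then obtain s where s: "\<forall>i<n. s i \<in> R" "r \<alpha> - fps_const (h \<alpha>) = (\<Sum>i<n. s i * z i)"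
      using mJ by blast
    have "(r \<alpha> - fps_const (h \<alpha>)) * mon n z \<alpha> = (\<Sum>i<n. s i * mon n z (\<alpha>(i := Suc (\<alpha> i))))"
      unfolding s(2) sum_distrib_right by (rule sum.cong) (simp_all add: mon_step mult.assoc)
    also have "\<dots> \<in> T (Suc k)" using s(1) a by (intro T_sum T_single H_step) auto
    finally show "(r \<alpha> - fps_const (h \<alpha>)) * mon n z \<alpha> \<in> T (Suc k)" .
  qed
  finally show ?thesis by blast
qed

lemma T_dvd: assumes "w \<in> T k" shows "fps_X^k dvd w"
proof -
  obtain r where r: "\<forall>\<alpha>\<in>Hset n k. r \<alpha> \<in> R" "w = (\<Sum>\<alpha>\<in>Hset n k. r \<alpha> * mon n z \<alpha>)"
    using assms unfolding T_iff by blast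
  show ?thesis unfolding r(2)
  proof (rule dvd_sum)
    fix \<alpha> assume "\<alpha> \<in> Hset n k"
    then have "fps_X^k dvd mon n z \<alpha>" using mon_dvd[of n z \<alpha>] z0 by (simp add: Hset_def)
    then show "fps_X^k dvd r \<alpha> * mon n z \<alpha>" by (rule dvd_mult)
  qed
qed

lemma T0: assumes "x \<in> R" shows "x \<in> T 0"
proof -
  have H0: "Hset n 0 = {\<lambda>_. 0}"
  proof (intro set_eqI iffI)
    fix \<alpha> assume "\<alpha> \<in> Hset n 0"
    then have a: "\<forall>i. n \<le> i \<longrightarrow> \<alpha> i = 0" "(\<Sum>i<n. \<alpha> i) = 0" unfolding Hset_def deg_def by auto
    have "\<alpha> i = 0" for i
    proof (cases "i < n")
      case True
      then have "\<alpha> i \<le> (\<Sum>i<n. \<alpha> i)" by (intro member_le_sum) auto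
      then show ?thesis using a(2) by simp
    next
      case False then show ?thesis using a(1) by simp
    qed
    then show "\<alpha> \<in> {\<lambda>_. 0}" by auto
  qed (simp add: Hset_def deg_def)
  have "x = (\<Sum>\<alpha>\<in>Hset n 0. x * mon n z \<alpha>)" unfolding H0 by (simp add: mon_def)
  then show ?thesis unfolding T_iff using assms by (intro exI[of _ "\<lambda>_. x"]) auto
qed

lemma resid_T: assumes "x \<in> R" shows "resid R n z x k \<in> T k"
proof (induction k)
  case 0 then show ?case using T0[OF assms] by simp
next
  case (Suc k)
  have "\<exists>h. resid R n z x k - Q n z k h \<in> Tset R n z (Suc k)" using T_step[OF Suc] by (simp add: T_def)
  then have "resid R n z x k - Q n z k (hs R n z x k) \<in> Tset R n z (Suc k)"
    unfolding hs_def by (rule someI_ex)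
  then show ?case unfolding resid_Suc T_def .
qed

lemma resid_sum: "x = (\<Sum>l<k. Q n z l (hs R n z x l)) + resid R n z x k"
  by (induction k) (simp_all add: resid_Suc del: resid.simps(2))

lemma R_sub_S: assumes "x \<in> R" shows "x = pseries_eval n z (\<lambda>\<alpha>. hs R n z x (deg n \<alpha>) \<alpha>)"
proof (rule fps_ext)
  fix j
  define cf where "cf = (\<lambda>\<alpha>. hs R n z x (deg n \<alpha>) \<alpha>)"
  have r0: "resid R n z x (Suc j) $ j = 0" using T_dvd[OF resid_T[OF assms]] by (rule Xdvd_nth) simp
  have "x $ j = (\<Sum>l<Suc j. Q n z l (hs R n z x l)) $ j"
    using arg_cong[OF resid_sum[of x "Suc j"], of "\<lambda>f. f $ j"] r0 by simp
  also have "\<dots> = (\<Sum>l\<in>{..j}. \<Sum>\<alpha>\<in>Hset n l. cf \<alpha> * mon n z \<alpha> $ j)"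
    unfolding fps_sum_nth Q_def lessThan_Suc_atMost
  proof (rule sum.cong[OF refl], rule sum.cong[OF refl])
    fix l \<alpha> assume "\<alpha> \<in> Hset n l"
    then have "deg n \<alpha> = l" by (simp add: Hset_def)
    then show "(fps_const (hs R n z x l \<alpha>) * mon n z \<alpha>) $ j = cf \<alpha> * mon n z \<alpha> $ j"
      by (simp add: cf_def)
  qed
  also have "\<dots> = (\<Sum>\<alpha>\<in>Aset n j. cf \<alpha> * mon n z \<alpha> $ j)"
    unfolding Aset_Union by (rule sum.UNION_disjoint[symmetric]) (auto simp: Hset_finite Hset_disj)
  also have "\<dots> = pseries_eval n z cf $ j" by (simp add: pseries_eval_nth)
  finally show "x $ j = pseries_eval n z (\<lambda>\<alpha>. hs R n z x (deg n \<alpha>) \<alpha>) $ j" unfolding cf_def .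
qed

lemma S_sub_R: "pseries_eval n z cf \<in> R"
proof -
  define P where "P = (\<Sum>\<alpha>\<in>Aset n c. fps_const (cf \<alpha>) * mon n z \<alpha>)"
  have PR: "P \<in> R" unfolding P_def by (intro sum_in mult_in mon_R) simp_all
  have "fps_X^c dvd (pseries_eval n z cf - P)"
  proof (rule Xdvd_intro)
    fix j assume j: "j < c"
    have sub: "Aset n j \<subseteq> Aset n c" using j by (auto simp: Aset_def)
    have "P $ j = (\<Sum>\<alpha>\<in>Aset n c. cf \<alpha> * mon n z \<alpha> $ j)" unfolding P_def fps_sum_nth by simp
    also have "\<dots> = (\<Sum>\<alpha>\<in>Aset n j. cf \<alpha> * mon n z \<alpha> $ j)"
    proof (rule sum.mono_neutral_right[OF Aset_finite sub])
      show "\<forall>\<alpha>\<in>Aset n c - Aset n j. cf \<alpha> * mon n z \<alpha> $ j = 0"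
      proof
        fix \<alpha> assume a: "\<alpha> \<in> Aset n c - Aset n j"
        then have "j < deg n \<alpha>" by (auto simp: Aset_def deg_def)
        then show "cf \<alpha> * mon n z \<alpha> $ j = 0" using mon_nth[of n z j \<alpha>] z0 by simp
      qed
    qed
    finally show "(pseries_eval n z cf - P) $ j = 0" by (simp add: pseries_eval_nth)
  qed
  then have "pseries_eval n z cf - P \<in> R" by (rule dvd_in) simp
  then have "pseries_eval n z cf - P + P \<in> R" using PR by (rule add_in)
  then show ?thesis by simp
qed

lemma R_eq_S: "R = pseries_subalg n z"
  unfolding pseries_subalg_def using R_sub_S S_sub_R by blast

end

theorem mainTheorem15:
  fixes R :: "'a::field fps set" and n :: nat and y :: "nat \<Rightarrow> 'a fps"
  assumes "k_subalgebra R"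
    and "fps_finite_over R"
    and "fps_birational R"
    and "fps_local R"
    and "min_generators R n y"
  defines "d \<equiv> max (HK_max R + 1) (conductor_degree R)"
  shows "R = pseries_subalg n (\<lambda>i. fps_truncate d (y i))
         \<and> (\<exists>N p. (\<forall>i<N. fps_is_poly (p i)) \<and> R = pseries_subalg N p)"
proof -
  interpret subalg R by unfold_locales (rule assms(1))
  define c where "c = conductor_degree R"
  have "\<exists>c. \<forall>z. fps_X^c * z \<in> R" using conductor_exists assms(1-3) by blast
  then have condc: "\<forall>z. fps_X^c * z \<in> R" unfolding c_def conductor_degree_def by (rule LeastI_ex)
  interpret setting R c by unfold_locales (use condc in blast)
  define z where "z i = fps_truncate d (y i)" for i
  have ym: "\<And>i. i < n \<Longrightarrow> y i \<in> max_ideal R" and gen: "fps_gen_ideal R {..<n} y = max_ideal R"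
    using assms(5) unfolding min_generators_def by auto
  have zdiff: "fps_X^d dvd (y i - z i)" for i
    by (rule Xdvd_intro) (simp add: z_def fps_truncate_def)
  have dHK: "HK_max R < d" and dc: "c \<le> d" unfolding d_def c_def by auto
  interpret gens R c n y z d
    by unfold_locales (use ym gen zdiff dHK dc in auto)
  interpret compl R c n z
  proof unfold_locales
    fix i assume "i < n" then show "z i \<in> max_ideal R" by (rule z_m)
  next
    fix x assume "x \<in> max_ideal R"
    then have "x \<in> J" by (rule m_sub_J)
    then show "\<exists>s. (\<forall>i<n. s i \<in> R) \<and> x = (\<Sum>i<n. s i * z i)" unfolding J_iff .
  qed
  have eq: "R = pseries_subalg n z" by (rule R_eq_S)
  have zeq: "(\<lambda>i. fps_truncate d (y i)) = z" by (rule ext) (simp add: z_def)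
  have poly: "\<forall>i<n. fps_is_poly (z i)"
    unfolding fps_is_poly_def z_def fps_truncate_def by (intro allI impI exI[of _ d]) simp
  show ?thesis unfolding zeq using eq poly by blast
qed

end
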